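(* Let $\mathcal{X}$ be a finite alphabet with orthonormal basis $\{|x\rangle\}_{x\in\mathcal{X}}$ of the classical system $X$, and let $E$ be a quantum system. Let $\rho=\sum_{x\in\mathcal{X}}P(x)|x\rangle\langle x|\otimes\omega(x)$ and $\rho_*=\sum_{x\in\mathcal{X}}P_*(x)|x\rangle\langle x|\otimes\omega_*(x)$ be classical-quantum states, where $P,P_*$ are probability distributions on $\mathcal{X}$ and $\omega(x),\omega_*(x)$ are density operators on $E$. Let $S\subseteq\mathcal{X}$, $\Pi=\sum_{x\in S}|x\rangle\langle x|$ (acting on $X$, tensored with the identity on $E$), $p=\mathrm{tr}\,\Pi\rho\Pi$, $p_*=\mathrm{tr}\,\Pi\rho_*\Pi$, and define the projected states $\tau=p^{-1}\Pi\rho\Pi$ and $\tau_*=p_*^{-1}\Pi\rho_*\Pi$ (with $p,p_*>0$). Let $\epsilon>0$. If $D(\rho,\rho_* )\le p\,\frac{\epsilon^2}{4}$, then $|p-p_*|\le p\,\frac{\epsilon^2}{2}$ and $D(\tau,\tau_* )\le\frac{\epsilon^2}{2}$.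
   Context: For operators $A,B$, the trace distance is $D(A,B)=\frac{1}{2}\mathrm{tr}|A-B|$, where $|O|=\sqrt{O^\dagger O}$. The positivity $p,p_*>0$ is needed for $\tau,\tau_*$ to be defined. *)

theory Defs
  imports "HOL-Analysis.Analysis"
begin

definition cadj :: "complex^'n^'m \<Rightarrow> complex^'m^'n" where
  "cadj A = (\<chi> i j. cnj (A $ j $ i))"

definition psd :: "complex^'n^'n \<Rightarrow> bool" where
  "psd A \<longleftrightarrow> cadj A = A \<and>
     (\<forall>v::complex^'n. let q = (\<Sum>i\<in>UNIV. cnj (v $ i) * (A *v v) $ i) in Im q = 0 \<and> Re q \<ge> 0)"

definition density :: "complex^'n^'n \<Rightarrow> bool" where
  "density A \<longleftrightarrow> psd A \<and> trace A = 1"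

definition mabs :: "complex^'n^'n \<Rightarrow> complex^'n^'n" where
  "mabs M = (THE R. psd R \<and> R ** R = cadj M ** M)"

definition tdist :: "complex^'n^'n \<Rightarrow> complex^'n^'n \<Rightarrow> real" where
  "tdist A B = Re (trace (mabs (A - B))) / 2"

text \<open>Classical-quantum state sum_x P(x) |x><x| (tensor) omega(x) on X (tensor) E,
  with basis of X (tensor) E indexed by pairs (x,e).\<close>
definition cq_state :: "('x::finite \<Rightarrow> real) \<Rightarrow> ('x \<Rightarrow> complex^'e::finite^'e)
     \<Rightarrow> complex^('x \<times> 'e)^('x \<times> 'e)" where
  "cq_state P \<omega> = (\<chi> i j. if fst i = fst j then complex_of_real (P (fst i)) * \<omega> (fst i) $ snd i $ snd j else 0)"

definition proj_cl :: "'x::finite set \<Rightarrow> complex^('x \<times> 'e::finite)^('x \<times> 'e)" where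
  "proj_cl S = (\<chi> i j. if i = j \<and> fst i \<in> S then 1 else 0)"

end

theory Submission
  imports Defs
begin

definition ip :: "complex^'n \<Rightarrow> complex^'n \<Rightarrow> complex" where
  "ip v w = (\<Sum>i\<in>UNIV. cnj (v$i) * w$i)"

lemma ip_cnj: "cnj (ip v w) = ip w v"
  by (simp add: ip_def mult.commute)

lemma norm_sq_vec: "(norm (v::complex^'n))^2 = (\<Sum>i\<in>UNIV. (cmod (v$i))^2)"
  by (simp add: norm_vec_def L2_set_def sum_nonneg)

lemma ip_self: "ip v v = of_real ((norm v)^2)"
  unfolding norm_sq_vec ip_def of_real_sum
  by (intro sum.cong refl) (metis complex_norm_square mult.commute)

lemma ip_self_eq0: "ip v v = 0 \<Longrightarrow> v = 0"
  by (simp add: ip_self)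

lemma ip_adj: "ip u (A *v v) = ip (cadj A *v u) v"
proof -
  have "ip u (A *v v) = (\<Sum>i\<in>UNIV. \<Sum>j\<in>UNIV. cnj (u$i) * A$i$j * v$j)"
    by (simp add: ip_def matrix_vector_mult_def sum_distrib_left mult_ac)
  also have "\<dots> = (\<Sum>j\<in>UNIV. \<Sum>i\<in>UNIV. cnj (u$i) * A$i$j * v$j)"
    by (rule sum.swap)
  also have "\<dots> = ip (cadj A *v u) v"
    by (simp add: ip_def matrix_vector_mult_def cadj_def sum_distrib_right sum_distrib_left mult_ac)
  finally show ?thesis .
qed

lemma ip_add_right: "ip u (v + w) = ip u v + ip u w"
  by (simp add: ip_def algebra_simps sum.distrib)
lemma ip_diff_right: "ip u (v - w) = ip u v - ip u w"
  by (simp add: ip_def algebra_simps sum_subtractf)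
lemma ip_add_left: "ip (u + w) v = ip u v + ip w v"
  by (simp add: ip_def algebra_simps sum.distrib)
lemma ip_diff_left: "ip (u - w) v = ip u v - ip w v"
  by (simp add: ip_def algebra_simps sum_subtractf)
lemma ip_scale_right: "ip u (c *s v) = c * ip u v"
  by (simp add: ip_def sum_distrib_left mult_ac)
lemma ip_scale_left: "ip (c *s u) v = cnj c * ip u v"
  by (simp add: ip_def sum_distrib_left mult_ac)
lemma ip_zero_right[simp]: "ip u 0 = 0" by (simp add: ip_def)
lemma ip_zero_left[simp]: "ip 0 u = 0" by (simp add: ip_def)
lemma ip_sum_right: "ip u (\<Sum>b\<in>B. f b) = (\<Sum>b\<in>B. ip u (f b))"
  by (induct B rule: infinite_finite_induct) (auto simp: ip_add_right)
lemma ip_sum_left: "ip (\<Sum>b\<in>B. f b) u = (\<Sum>b\<in>B. ip (f b) u)"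
  by (induct B rule: infinite_finite_induct) (auto simp: ip_add_left)

lemma mv_scale: "A *v (c *s v) = c *s (A *v (v::complex^'n))"
  by (simp add: matrix_vector_mult_def vector_scalar_mult_def vec_eq_iff sum_distrib_left mult_ac)
lemma mv_add: "A *v (v + w) = A *v v + A *v (w::complex^'n)"
  by (simp add: matrix_vector_mult_def vec_eq_iff sum.distrib algebra_simps)
lemma mv_diff: "A *v (v - w) = A *v v - A *v (w::complex^'n)"
  by (simp add: matrix_vector_mult_def vec_eq_iff sum_subtractf algebra_simps)
lemma mv_sum: "A *v (\<Sum>b\<in>B. f b) = (\<Sum>b\<in>B. A *v (f b::complex^'n))"
  by (induct B rule: infinite_finite_induct) (auto simp: mv_add)

lemma ip_herm: "cadj A = A \<Longrightarrow> ip u (A *v v) = ip (A *v u) v"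
  by (simp add: ip_adj)

lemma mcnj: "z * cnj z = (complex_of_real (cmod z))^2"
  by (metis complex_norm_square of_real_power)
lemma mcnj': "cnj z * z = (complex_of_real (cmod z))^2"
  by (metis complex_norm_square of_real_power mult.commute)

definition onb :: "(complex^'n) set \<Rightarrow> bool" where
  "onb B \<longleftrightarrow> finite B \<and> (\<forall>b\<in>B. \<forall>c\<in>B. ip b c = (if b = c then 1 else 0))
     \<and> (\<forall>v. v = (\<Sum>b\<in>B. ip b v *s b))"

definition spec :: "(complex^'n \<Rightarrow> complex) \<Rightarrow> (complex^'n) set \<Rightarrow> complex^'n^'n" where
  "spec f B = (\<chi> i j. \<Sum>b\<in>B. f b * b$i * cnj (b$j))"

lemma spec_apply: "spec f B *v v = (\<Sum>b\<in>B. (f b * ip b v) *s b)"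
proof -
  have "(spec f B *v v)$i = (\<Sum>b\<in>B. (f b * ip b v) * b$i)" for i
  proof -
    have "(spec f B *v v)$i = (\<Sum>j\<in>UNIV. \<Sum>b\<in>B. f b * b$i * cnj (b$j) * v$j)"
      by (simp add: spec_def matrix_vector_mult_def sum_distrib_right)
    also have "\<dots> = (\<Sum>b\<in>B. \<Sum>j\<in>UNIV. f b * b$i * cnj (b$j) * v$j)"
      by (rule sum.swap)
    also have "\<dots> = (\<Sum>b\<in>B. (f b * ip b v) * b$i)"
      by (simp add: ip_def sum_distrib_left sum_distrib_right mult_ac)
    finally show ?thesis .
  qed
  then show ?thesis by (simp add: vec_eq_iff)
qed

lemma onbD: assumes "onb B"
  shows "finite B" "\<And>b c. b\<in>B \<Longrightarrow> c\<in>B \<Longrightarrow> ip b c = (if b = c then 1 else 0)"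
    "\<And>v. v = (\<Sum>b\<in>B. ip b v *s b)"
  using assms unfolding onb_def by auto

lemma onb_coeff: assumes "onb B" "c \<in> B"
  shows "ip c (\<Sum>b\<in>B. g b *s b) = g c"
proof -
  have "ip c (\<Sum>b\<in>B. g b *s b) = (\<Sum>b\<in>B. g b * (if c = b then 1 else 0))"
    by (simp add: ip_sum_right ip_scale_right onbD(2)[OF assms(1) assms(2)])
  also have "\<dots> = g c" using onbD(1)[OF assms(1)] assms(2)
    by (simp add: if_distrib cong: if_cong)
  finally show ?thesis .
qed

lemma onb_norm1: "onb B \<Longrightarrow> b \<in> B \<Longrightarrow> norm b = 1"
proof -
  assume a: "onb B" "b \<in> B"
  have "complex_of_real ((norm b)^2) = 1" using onbD(2)[OF a(1) a(2) a(2)] ip_self[of b] by simp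
  then have "(norm b)^2 = 1" using of_real_eq_1_iff by blast
  then show "norm b = 1" using norm_ge_zero[of b] by (auto simp: power2_eq_1_iff)
qed

lemma onb_parseval: assumes "onb B"
  shows "(norm v)^2 = (\<Sum>b\<in>B. (cmod (ip b v))^2)"
proof -
  have "ip v v = ip v (\<Sum>b\<in>B. ip b v *s b)" using onbD(3)[OF assms, of v] by simp
  also have "\<dots> = (\<Sum>b\<in>B. ip b v * cnj (ip b v))"
    by (simp add: ip_sum_right ip_scale_right ip_cnj)
  also have "\<dots> = of_real (\<Sum>b\<in>B. (cmod (ip b v))^2)"
    by (simp add: of_real_sum mcnj)
  finally have "complex_of_real ((norm v)^2) = complex_of_real (\<Sum>b\<in>B. (cmod (ip b v))^2)"
    by (simp add: ip_self)
  then show ?thesis using of_real_eq_iff by blast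
qed

lemma spec_apply_basis: assumes "onb B" "c \<in> B" shows "spec f B *v c = f c *s c"
proof -
  have "spec f B *v c = (\<Sum>b\<in>B. (f b * (if b = c then 1 else 0)) *s b)"
    unfolding spec_apply using onbD(2)[OF assms(1) _ assms(2)] by (intro sum.cong) auto
  also have "\<dots> = (\<Sum>b\<in>B. if b = c then f c *s c else 0)"
    by (intro sum.cong) auto
  also have "\<dots> = f c *s c" using onbD(1)[OF assms(1)] assms(2) by simp
  finally show ?thesis .
qed

lemma spec_quad: assumes "onb B"
  shows "ip v (spec f B *v v) = (\<Sum>b\<in>B. f b * of_real ((cmod (ip b v))^2))"
proof -
  have e: "ip v b = cnj (ip b v)" for b by (simp add: ip_cnj)
  show ?thesis unfolding spec_apply ip_sum_right ip_scale_right
    by (intro sum.cong refl) (simp add: e mcnj)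
qed

lemma spec_mult: assumes "onb B"
  shows "spec f B ** spec g B = spec (\<lambda>b. f b * g b) B"
proof -
  have "(spec f B ** spec g B) *v x = spec (\<lambda>b. f b * g b) B *v x" for x
  proof -
    have "(spec f B ** spec g B) *v x = spec f B *v (spec g B *v x)"
      by (simp add: matrix_vector_mul_assoc)
    also have "\<dots> = (\<Sum>b\<in>B. (g b * ip b x) *s (spec f B *v b))"
      by (simp add: spec_apply[of g] mv_sum mv_scale)
    also have "\<dots> = (\<Sum>b\<in>B. (g b * ip b x) *s (f b *s b))"
      using spec_apply_basis[OF assms] by (intro sum.cong) auto
    also have "\<dots> = spec (\<lambda>b. f b * g b) B *v x"
      by (simp add: spec_apply vector_smult_assoc mult_ac)
    finally show ?thesis .
  qed
  then show ?thesis by (simp add: matrix_eq)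
qed

lemma cadj_spec: "cadj (spec f B) = spec (\<lambda>b. cnj (f b)) B"
  by (simp add: cadj_def spec_def vec_eq_iff cnj_sum mult_ac)

lemma trace_onb: assumes "onb B"
  shows "trace M = (\<Sum>b\<in>B. ip b (M *v b))"
proof -
  have delta: "(\<Sum>b\<in>B. cnj (b$j) * b$i) = (if i = j then 1 else 0)" for i j
  proof -
    have "axis j 1 = (\<Sum>b\<in>B. ip b (axis j 1) *s b)" by (rule onbD(3)[OF assms])
    then have "axis j 1 $ i = (\<Sum>b\<in>B. ip b (axis j 1) *s b) $ i" by simp
    moreover have "ip b (axis j 1) = cnj (b$j)" for b
    proof -
      have "ip b (axis j 1) = (\<Sum>i\<in>UNIV. if i = j then cnj (b$j) else 0)"
        unfolding ip_def axis_def by (intro sum.cong) auto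
      then show ?thesis by simp
    qed
    ultimately show ?thesis by (simp add: axis_def)
  qed
  have "(\<Sum>b\<in>B. ip b (M *v b)) = (\<Sum>b\<in>B. \<Sum>i\<in>UNIV. \<Sum>j\<in>UNIV. M$i$j * (cnj (b$i) * b$j))"
    by (simp add: ip_def matrix_vector_mult_def sum_distrib_left mult_ac)
  also have "\<dots> = (\<Sum>i\<in>UNIV. \<Sum>b\<in>B. \<Sum>j\<in>UNIV. M$i$j * (cnj (b$i) * b$j))"
    by (rule sum.swap)
  also have "\<dots> = (\<Sum>i\<in>UNIV. \<Sum>j\<in>UNIV. \<Sum>b\<in>B. M$i$j * (cnj (b$i) * b$j))"
    by (intro sum.cong refl sum.swap)
  also have "\<dots> = (\<Sum>i\<in>UNIV. \<Sum>j\<in>UNIV. M$i$j * (if j = i then 1 else 0))"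
    by (simp add: sum_distrib_left[symmetric] delta)
  also have "\<dots> = trace M"
    by (simp add: trace_def if_distrib cong: if_cong)
  finally show ?thesis by simp
qed

lemma psd_iff: "psd A \<longleftrightarrow> cadj A = A \<and> (\<forall>v. Im (ip v (A *v v)) = 0 \<and> Re (ip v (A *v v)) \<ge> 0)"
  by (simp add: psd_def ip_def Let_def)

lemma quad_real: fixes a c :: real assumes "\<forall>t. 2*t*a + t^2*c \<ge> 0" shows "a = 0"
proof (rule ccontr)
  assume a0: "a \<noteq> 0"
  then have a2: "a^2 > 0" by simp
  show False
  proof (cases "c \<le> 0")
    case True
    have "2*(-a)*a + (-a)^2*c \<ge> 0" using assms by blast
    moreover have "(-a)^2*c \<le> 0" using True by (simp add: mult_nonneg_nonpos)
    moreover have "2*(-a)*a = - 2 * a^2" by (simp add: power2_eq_square)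
    ultimately show False using a2 by linarith
  next
    case False
    then have c0: "c > 0" by simp
    have "2*(-a/c)*a + (-a/c)^2*c \<ge> 0" using assms by blast
    moreover have "2*(-a/c)*a + (-a/c)^2*c = - (a^2/c)" using c0
      by (simp add: field_simps power2_eq_square)
    moreover have "a^2/c > 0" using a2 c0 by simp
    ultimately show False by linarith
  qed
qed

lemma cadj_cadj[simp]: "cadj (cadj A) = A" by (simp add: cadj_def vec_eq_iff)
lemma cadj_diff: "cadj (A - B) = cadj A - cadj B" by (simp add: cadj_def vec_eq_iff)
lemma cadj_add: "cadj (A + B) = cadj A + cadj B" by (simp add: cadj_def vec_eq_iff)
lemma cadj_mult: "cadj (A ** B) = cadj B ** cadj A"
  by (simp add: cadj_def vec_eq_iff matrix_matrix_mult_def cnj_sum mult.commute)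
lemma cadj_scaleR: "cadj (c *\<^sub>R A) = c *\<^sub>R cadj A"
  by (simp add: cadj_def vec_eq_iff)

lemma herm_expand:
  assumes "cadj M = M"
  shows "Re (ip (w + complex_of_real t *s z) (M *v (w + complex_of_real t *s z)))
     = Re (ip w (M *v w)) + 2*t*Re (ip z (M *v w)) + t^2 * Re (ip z (M *v z))"
proof -
  have e: "ip w (M *v z) = cnj (ip z (M *v w))"
    using ip_herm[OF assms, of w z] by (simp add: ip_cnj)
  show ?thesis
    by (simp add: mv_add mv_scale ip_add_left ip_add_right ip_scale_left ip_scale_right e
        power2_eq_square algebra_simps)
qed

lemma psd_null: assumes "psd M" "Re (ip w (M *v w)) = 0" shows "M *v w = 0"
proof -
  have h: "cadj M = M" and q: "\<And>v. Re (ip v (M *v v)) \<ge> 0" using assms(1) by (auto simp: psd_iff)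
  have "Re (ip z (M *v w)) = 0" for z
  proof (rule quad_real)
    show "\<forall>t. 2*t*Re (ip z (M *v w)) + t^2 * Re (ip z (M *v z)) \<ge> 0"
      using q[of "w + complex_of_real _ *s z"] herm_expand[OF h, of w _ z] assms(2) by auto
  qed
  from this[of "M *v w"] have "Re (ip (M *v w) (M *v w)) = 0" .
  then show ?thesis by (simp add: ip_self)
qed

definition stdb :: "(complex^'n) set" where "stdb = range (\<lambda>i. axis i 1)"

lemma ip_axis: "ip (axis i 1) v = v$i"
proof -
  have "ip (axis i 1) v = (\<Sum>j\<in>UNIV. if j = i then v$i else 0)"
    unfolding ip_def axis_def by (intro sum.cong) auto
  then show ?thesis by simp
qed

lemma onb_stdb: "onb (stdb :: (complex^'n) set)"
proof -
  have inj: "inj (\<lambda>i::'n. axis i (1::complex))" by (auto simp: inj_on_def axis_eq_axis)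
  have "v = (\<Sum>b\<in>stdb. ip b v *s b)" for v :: "complex^'n"
    unfolding stdb_def sum.reindex[OF inj] by (simp add: ip_axis basis_expansion)
  moreover have "ip (axis i 1) (axis j 1) = (if axis i 1 = (axis j 1 :: complex^'n) then 1 else 0)" for i j
    by (cases "i = j") (simp_all add: ip_axis axis_eq_axis, simp_all add: axis_def)
  ultimately show ?thesis unfolding onb_def stdb_def by auto
qed

lemma sandwich_nonneg:
  assumes "psd M" "cadj D = D"
  shows "Re (ip b ((D ** M ** D) *v b)) \<ge> 0" "Re (ip b ((D ** M ** D) *v b)) = Re (ip (D *v b) (M *v (D *v b)))"
proof -
  have "ip b ((D ** M ** D) *v b) = ip (D *v b) (M *v (D *v b))"
    by (metis assms(2) ip_herm matrix_vector_mul_assoc)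
  then show "Re (ip b ((D ** M ** D) *v b)) = Re (ip (D *v b) (M *v (D *v b)))" by simp
  then show "Re (ip b ((D ** M ** D) *v b)) \<ge> 0" using assms(1) by (simp add: psd_iff)
qed

lemma psd_sqrt_unique:
  fixes R R' :: "complex^'n^'n"
  assumes R: "psd R" and R': "psd R'" and eq: "R ** R = R' ** R'"
  shows "R = R'"
proof -
  define D where "D = R - R'"
  have hR: "cadj R = R" and hR': "cadj R' = R'" using R R' by (auto simp: psd_iff)
  have hD: "cadj D = D" by (simp add: D_def cadj_diff hR hR')
  have "R ** D + D ** R' = R ** R - R' ** R'"
    by (simp add: D_def matrix_matrix_mult_def vec_eq_iff sum_subtractf sum.distrib algebra_simps)
  then have z: "R ** D + D ** R' = 0" using eq by simp
  have "trace (D ** R ** D) + trace (D ** R' ** D) = trace (D ** (R ** D + D ** R'))"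
    by (metis matrix_add_ldistrib matrix_mul_assoc trace_add trace_mul_sym)
  then have tz: "trace (D ** R ** D) + trace (D ** R' ** D) = 0" using z by (simp add: trace_def)
  have fin: "finite (stdb :: (complex^'n) set)" using onbD(1)[OF onb_stdb] .
  have t1: "trace (D ** R ** D) = (\<Sum>b\<in>stdb. ip b ((D ** R ** D) *v b))"
    by (rule trace_onb[OF onb_stdb])
  have t2: "trace (D ** R' ** D) = (\<Sum>b\<in>stdb. ip b ((D ** R' ** D) *v b))"
    by (rule trace_onb[OF onb_stdb])
  have "(\<Sum>b\<in>stdb. Re (ip b ((D ** R ** D) *v b))) + (\<Sum>b\<in>stdb. Re (ip b ((D ** R' ** D) *v b))) = 0"
    using arg_cong[OF tz, of Re] unfolding t1 t2 by (simp add: Re_sum)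
  moreover have s1: "(\<Sum>b\<in>stdb. Re (ip b ((D ** R ** D) *v b))) \<ge> 0"
    using sandwich_nonneg(1)[OF R hD] by (simp add: sum_nonneg)
  moreover have s2: "(\<Sum>b\<in>stdb. Re (ip b ((D ** R' ** D) *v b))) \<ge> 0"
    using sandwich_nonneg(1)[OF R' hD] by (simp add: sum_nonneg)
  ultimately have z1: "(\<Sum>b\<in>stdb. Re (ip b ((D ** R ** D) *v b))) = 0"
    and z2: "(\<Sum>b\<in>stdb. Re (ip b ((D ** R' ** D) *v b))) = 0" by linarith+
  have Db0: "D *v b = 0" if b: "b \<in> stdb" for b
  proof -
    have "Re (ip b ((D ** R ** D) *v b)) = 0"
      using z1 sum_nonneg_eq_0_iff[OF fin, of "\<lambda>b. Re (ip b ((D ** R ** D) *v b))"]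
        sandwich_nonneg(1)[OF R hD] b by auto
    then have a: "R *v (D *v b) = 0" using psd_null[OF R] sandwich_nonneg(2)[OF R hD] by simp
    have "Re (ip b ((D ** R' ** D) *v b)) = 0"
      using z2 sum_nonneg_eq_0_iff[OF fin, of "\<lambda>b. Re (ip b ((D ** R' ** D) *v b))"]
        sandwich_nonneg(1)[OF R' hD] b by auto
    then have a': "R' *v (D *v b) = 0" using psd_null[OF R'] sandwich_nonneg(2)[OF R' hD] by simp
    have "D *v (D *v b) = 0" using a a' by (simp add: D_def matrix_vector_mult_diff_rdistrib)
    then have "ip (D *v b) (D *v b) = 0" using ip_herm[OF hD, of b "D *v b"] by simp
    then show ?thesis by (rule ip_self_eq0)
  qed
  have "D *v x = 0 *v x" for x
  proof -
    have "D *v x = D *v (\<Sum>b\<in>stdb. ip b x *s b)"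
      using onbD(3)[OF onb_stdb, of x] by (rule arg_cong)
    also have "\<dots> = (\<Sum>b\<in>stdb. ip b x *s (D *v b))" by (simp add: mv_sum mv_scale)
    finally have "D *v x = (\<Sum>b\<in>stdb. ip b x *s (D *v b))" .
    then show ?thesis using Db0 by simp
  qed
  then have "D = 0" by (simp add: matrix_eq)
  then show ?thesis by (simp add: D_def)
qed

lemma mabs_eq: assumes "psd R" "R ** R = cadj M ** M" shows "mabs M = R"
  unfolding mabs_def
proof (rule the_equality)
  show "psd R \<and> R ** R = cadj M ** M" using assms by simp
  fix R' assume "psd R' \<and> R' ** R' = cadj M ** M"
  then show "R' = R" using psd_sqrt_unique assms by metis
qed

lemma psd_spec: assumes "onb B" "\<And>b. b \<in> B \<Longrightarrow> r b \<ge> 0"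
  shows "psd (spec (\<lambda>b. complex_of_real (r b)) B)"
proof -
  have "cadj (spec (\<lambda>b. complex_of_real (r b)) B) = spec (\<lambda>b. complex_of_real (r b)) B"
    by (simp add: cadj_spec)
  moreover have "ip v (spec (\<lambda>b. complex_of_real (r b)) B *v v)
      = complex_of_real (\<Sum>b\<in>B. r b * (cmod (ip b v))^2)" for v
    by (simp add: spec_quad[OF assms(1)] of_real_sum)
  moreover have "(\<Sum>b\<in>B. r b * (cmod (ip b v))^2) \<ge> 0" for v
    using assms(2) by (simp add: sum_nonneg)
  ultimately show ?thesis by (simp add: psd_iff)
qed

definition orth :: "(complex^'n) set \<Rightarrow> bool" where
  "orth B \<longleftrightarrow> finite B \<and> (\<forall>b\<in>B. \<forall>c\<in>B. ip b c = (if b = c then 1 else 0))"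

definition eig :: "complex^'n^'n \<Rightarrow> (complex^'n) set \<Rightarrow> bool" where
  "eig A B \<longleftrightarrow> (\<forall>b\<in>B. A *v b = complex_of_real (Re (ip b (A *v b))) *s b)"

lemma inner_ip: "inner b c = Re (ip b c)"
  by (simp add: inner_vec_def ip_def inner_complex_def Re_sum)

lemma orth_card: assumes "orth (B :: (complex^'n) set)" shows "card B \<le> DIM(complex^'n)"
proof -
  have "pairwise orthogonal B"
    using assms unfolding orth_def pairwise_def orthogonal_def inner_ip by auto
  moreover have "0 \<notin> B" using assms unfolding orth_def by fastforce
  ultimately have "independent B" by (rule pairwise_orthogonal_independent)
  then show ?thesis using independent_bound by blast
qed

lemma orth_coeff: assumes "orth B" "c \<in> B"
  shows "ip c (\<Sum>b\<in>B. g b *s b) = g c"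
proof -
  have "ip c (\<Sum>b\<in>B. g b *s b) = (\<Sum>b\<in>B. if b = c then g c else 0)"
    unfolding ip_sum_right ip_scale_right using assms unfolding orth_def by (intro sum.cong) auto
  then show ?thesis using assms unfolding orth_def by simp
qed

lemma norm_smult_c: "norm (c *s (x::complex^'n)) = cmod c * norm x"
proof -
  have "(norm (c *s x))^2 = (cmod c * norm x)^2"
    unfolding norm_sq_vec power_mult_distrib
    by (simp add: vector_scalar_mult_def norm_mult power_mult_distrib sum_distrib_left)
  then show ?thesis by (simp add: power2_eq_iff_nonneg)
qed

lemma cont_nth: "continuous_on s (\<lambda>x::complex^'n. x$i)"
  by (rule linear_continuous_on) (rule bounded_linear_vec_nth)

lemma cont_ip: "continuous_on s (\<lambda>x::complex^'n. ip b x)"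
  unfolding ip_def by (intro continuous_on_sum continuous_on_mult continuous_on_const cont_nth)

lemma cont_quad: "continuous_on s (\<lambda>x::complex^'n. Re (ip x (A *v x)))"
  unfolding ip_def matrix_vector_mult_def vec_lambda_beta
  by (intro continuous_on_Re continuous_on_sum continuous_on_mult continuous_on_const
      cont_nth continuous_on_cnj)

lemma cadj_id: "cadj (mat 1 :: complex^'n^'n) = mat 1"
  by (simp add: cadj_def mat_def vec_eq_iff)

lemma quad_scale: "ip (c *s x) (A *v (c *s x)) = cnj c * c * ip x (A *v x)"
  by (simp add: mv_scale ip_scale_left ip_scale_right)

lemma eigvec_exists:
  fixes A :: "complex^'n^'n"
  assumes h: "cadj A = A" and oB: "orth B" and eB: "eig A B"
    and w: "\<forall>b\<in>B. ip b w = 0" and w0: "w \<noteq> 0"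
  shows "\<exists>v. norm v = 1 \<and> (\<forall>b\<in>B. ip b v = 0) \<and> A *v v = complex_of_real (Re (ip v (A *v v))) *s v"
proof -
  define W where "W = {x::complex^'n. \<forall>b\<in>B. ip b x = 0}"
  define K where "K = sphere (0::complex^'n) 1 \<inter> W"
  define g where "g x = Re (ip x (A *v x))" for x
  have Wadd: "x + y \<in> W" if "x \<in> W" "y \<in> W" for x y using that by (simp add: W_def ip_add_right)
  have Wdiff: "x - y \<in> W" if "x \<in> W" "y \<in> W" for x y using that by (simp add: W_def ip_diff_right)
  have Wscale: "c *s x \<in> W" if "x \<in> W" for x c using that by (simp add: W_def ip_scale_right)
  have WA: "A *v x \<in> W" if "x \<in> W" for x
  proof -
    have "ip b (A *v x) = 0" if b: "b \<in> B" for b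
    proof -
      have "ip b (A *v x) = ip (A *v b) x" by (rule ip_herm[OF h])
      also have "\<dots> = ip (complex_of_real (Re (ip b (A *v b))) *s b) x"
        using eB b unfolding eig_def by simp
      also have "\<dots> = 0" using \<open>x \<in> W\<close> b by (simp add: ip_scale_left W_def)
      finally show ?thesis .
    qed
    then show ?thesis by (simp add: W_def)
  qed
  have closedW: "closed W"
  proof -
    have "W = (\<Inter>b\<in>B. {x. ip b x = 0})" by (auto simp: W_def)
    moreover have "closed {x::complex^'n. ip b x = 0}" for b
      by (rule closed_Collect_eq) (rule cont_ip, rule continuous_on_const)
    ultimately show ?thesis by (simp add: closed_INT)
  qed
  have compK: "compact K" unfolding K_def using closedW by (intro compact_Int_closed) auto
  have w1: "(1 / norm w) *s w \<in> K"
    using w w0 unfolding K_def W_def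
    by (simp add: ip_scale_right norm_smult_c norm_divide)
  then have Kne: "K \<noteq> {}" by auto
  obtain v where vK: "v \<in> K" and vmax: "\<And>y. y \<in> K \<Longrightarrow> g y \<le> g v"
    using continuous_attains_sup[OF compK Kne, of g] cont_quad[of K A] unfolding g_def by blast
  have vW: "v \<in> W" and nv: "norm v = 1" using vK by (auto simp: K_def)
  define lam where "lam = g v"
  have bound: "g x \<le> lam * (norm x)^2" if "x \<in> W" for x
  proof (cases "x = 0")
    case True then show ?thesis by (simp add: g_def)
  next
    case False
    define c where "c = complex_of_real (1 / norm x)"
    have "c *s x \<in> K" using that False unfolding K_def c_def
      by (simp add: Wscale norm_smult_c norm_divide)
    then have "g (c *s x) \<le> lam" using vmax lam_def by blast
    moreover have "g (c *s x) = g x / (norm x)^2"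
      unfolding g_def quad_scale c_def by (simp add: power2_eq_square)
    ultimately show ?thesis using False by (simp add: field_simps)
  qed
  have perpRe: "Re (ip z (A *v v)) = 0" if zW: "z \<in> W" and zv: "ip v z = 0" for z
  proof -
    have zv': "ip z v = 0" using zv ip_cnj[of v z] by simp
    have "\<forall>t. 2*t*(- Re (ip z (A *v v))) + t^2 * (lam * (norm z)^2 - g z) \<ge> 0"
    proof
      fix t :: real
      let ?x = "v + complex_of_real t *s z"
      have xW: "?x \<in> W" using vW zW by (intro Wadd Wscale)
      have "g ?x = lam + 2*t*Re (ip z (A *v v)) + t^2 * g z"
        unfolding g_def lam_def using herm_expand[OF h, of v t z] by simp
      moreover have "(norm ?x)^2 = 1 + t^2 * (norm z)^2"
      proof -
        have "Re (ip ?x (mat 1 *v ?x)) = Re (ip v (mat 1 *v v)) + 2*t*Re (ip z (mat 1 *v v)) + t^2 * Re (ip z (mat 1 *v z))"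
          by (rule herm_expand[OF cadj_id])
        then show ?thesis using zv' nv by (simp add: ip_self)
      qed
      moreover have "g ?x \<le> lam * (norm ?x)^2" using bound[OF xW] .
      ultimately show "2*t*(- Re (ip z (A *v v))) + t^2 * (lam * (norm z)^2 - g z) \<ge> 0"
        by (simp add: algebra_simps)
    qed
    then have "- Re (ip z (A *v v)) = 0" by (rule quad_real)
    then show ?thesis by simp
  qed
  have perp: "ip z (A *v v) = 0" if zW: "z \<in> W" and zv: "ip v z = 0" for z
  proof -
    have "Re (ip z (A *v v)) = 0" using perpRe[OF zW zv] .
    moreover have "Re (ip (\<i> *s z) (A *v v)) = 0"
      using perpRe[of "\<i> *s z"] zW zv by (simp add: Wscale ip_scale_right)
    then have "Im (ip z (A *v v)) = 0" by (simp add: ip_scale_left)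
    ultimately show ?thesis by (simp add: complex_eq_iff)
  qed
  define mu where "mu = ip v (A *v v)"
  define u where "u = A *v v - mu *s v"
  have uW: "u \<in> W" unfolding u_def using vW by (intro Wdiff WA Wscale)
  have vv: "ip v v = 1" using nv by (simp add: ip_self)
  have uv: "ip v u = 0" unfolding u_def by (simp add: ip_diff_right ip_scale_right vv mu_def)
  have uv': "ip u v = 0" using uv ip_cnj[of v u] by simp
  have "ip u u = ip u (A *v v) - mu * ip u v" unfolding u_def
    by (simp add: ip_diff_right ip_scale_right)
  also have "\<dots> = 0" using perp[OF uW uv] uv' by simp
  finally have "u = 0" by (rule ip_self_eq0)
  then have Av: "A *v v = mu *s v" by (simp add: u_def)
  have "cnj mu = mu" unfolding mu_def using ip_herm[OF h, of v v] ip_cnj[of v "A *v v"] by simp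
  then have "mu = complex_of_real (Re mu)" by (metis Reals_cnj_iff complex_is_Real_iff of_real_Re)
  then have "A *v v = complex_of_real (Re (ip v (A *v v))) *s v" using Av mu_def by metis
  then show ?thesis using nv vW unfolding W_def by blast
qed

lemma spectral_exists:
  fixes A :: "complex^'n^'n"
  assumes h: "cadj A = A"
  shows "\<exists>B. onb B \<and> eig A B"
proof -
  define F where "F = {B :: (complex^'n) set. orth B \<and> eig A B}"
  have "{} \<in> F" by (simp add: F_def orth_def eig_def)
  have cF: "card ` F \<subseteq> {..DIM(complex^'n)}" using orth_card by (auto simp: F_def)
  then have finF: "finite (card ` F)" by (rule finite_subset) simp
  define m where "m = Max (card ` F)"
  have "m \<in> card ` F" unfolding m_def using finF \<open>{} \<in> F\<close> by (intro Max_in) auto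
  then obtain B where BF: "B \<in> F" and cB: "card B = m" by auto
  have oB: "orth B" and eB: "eig A B" using BF by (auto simp: F_def)
  have le: "card B' \<le> m" if "B' \<in> F" for B' unfolding m_def using finF that by (intro Max_ge) auto
  have complete: "v = (\<Sum>b\<in>B. ip b v *s b)" for v
  proof (rule ccontr)
    assume ne: "v \<noteq> (\<Sum>b\<in>B. ip b v *s b)"
    define w where "w = v - (\<Sum>b\<in>B. ip b v *s b)"
    have w0: "w \<noteq> 0" using ne by (simp add: w_def)
    have wperp: "\<forall>b\<in>B. ip b w = 0"
      using orth_coeff[OF oB] by (simp add: w_def ip_diff_right)
    obtain u where nu: "norm u = 1" and uperp: "\<forall>b\<in>B. ip b u = 0"
      and Au: "A *v u = complex_of_real (Re (ip u (A *v u))) *s u"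
      using eigvec_exists[OF h oB eB wperp w0] by blast
    have uu: "ip u u = 1" using nu by (simp add: ip_self)
    have uB: "u \<notin> B" using uperp uu by auto
    have ub: "ip u b = 0" if "b \<in> B" for b using uperp that ip_cnj[of b u] by simp
    have "orth (insert u B)" using oB uu uperp ub unfolding orth_def by auto
    moreover have "eig A (insert u B)" using eB Au unfolding eig_def by auto
    ultimately have "insert u B \<in> F" by (simp add: F_def)
    then have "card (insert u B) \<le> m" by (rule le)
    moreover have "card (insert u B) = m + 1" using uB oB cB by (simp add: orth_def)
    ultimately show False by simp
  qed
  have "onb B" using oB complete unfolding onb_def orth_def by blast
  then show ?thesis using eB by blast
qed

lemma herm_spec_eq:
  assumes "onb B" "eig A B"
  shows "A = spec (\<lambda>b. complex_of_real (Re (ip b (A *v b)))) B"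
proof -
  have "A *v x = spec (\<lambda>b. complex_of_real (Re (ip b (A *v b)))) B *v x" for x
  proof -
    have "A *v x = A *v (\<Sum>b\<in>B. ip b x *s b)"
      using onbD(3)[OF assms(1), of x] by (rule arg_cong)
    also have "\<dots> = (\<Sum>b\<in>B. ip b x *s (A *v b))" by (simp add: mv_sum mv_scale)
    also have "\<dots> = (\<Sum>b\<in>B. ip b x *s (complex_of_real (Re (ip b (A *v b))) *s b))"
      using assms(2) unfolding eig_def by (intro sum.cong) auto
    also have "\<dots> = spec (\<lambda>b. complex_of_real (Re (ip b (A *v b)))) B *v x"
      by (simp add: spec_apply vector_smult_assoc mult_ac)
    finally show ?thesis .
  qed
  then show ?thesis by (subst matrix_eq) blast
qed

lemma herm_decomp:
  fixes H :: "complex^'n^'n"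
  assumes "cadj H = H"
  obtains B l where "onb B" "H = spec (\<lambda>b. complex_of_real (l b)) B"
proof -
  obtain B where B: "onb B" and e: "eig H B" using spectral_exists[OF assms] by blast
  show thesis by (rule that[OF B herm_spec_eq[OF B e]])
qed

lemma trace_spec: assumes "onb B" shows "trace (spec f B) = (\<Sum>b\<in>B. f b)"
proof -
  have "trace (spec f B) = (\<Sum>b\<in>B. ip b (spec f B *v b))" by (rule trace_onb[OF assms])
  also have "\<dots> = (\<Sum>b\<in>B. f b)"
    using spec_apply_basis[OF assms] onbD(2)[OF assms] by (intro sum.cong) (auto simp: ip_scale_right)
  finally show ?thesis .
qed

lemma mabs_spec:
  assumes B: "onb B"
  shows "mabs (spec (\<lambda>b. complex_of_real (l b)) B) = spec (\<lambda>b. complex_of_real \<bar>l b\<bar>) B"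
proof (rule mabs_eq)
  show "psd (spec (\<lambda>b. complex_of_real \<bar>l b\<bar>) B)" by (rule psd_spec[OF B]) simp
  have "cadj (spec (\<lambda>b. complex_of_real (l b)) B) = spec (\<lambda>b. complex_of_real (l b)) B"
    by (simp add: cadj_spec)
  then show "spec (\<lambda>b. complex_of_real \<bar>l b\<bar>) B ** spec (\<lambda>b. complex_of_real \<bar>l b\<bar>) B =
    cadj (spec (\<lambda>b. complex_of_real (l b)) B) ** spec (\<lambda>b. complex_of_real (l b)) B"
    by (simp add: spec_mult[OF B] abs_mult_self_eq flip: of_real_mult)
qed

definition contr :: "complex^'n^'n \<Rightarrow> bool" where
  "contr C \<longleftrightarrow> (\<forall>v. cmod (ip v (C *v v)) \<le> (norm v)^2)"

lemma tn_bound: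
  fixes H C :: "complex^'n^'n"
  assumes h: "cadj H = H" and C: "contr C"
  shows "cmod (trace (C ** H)) \<le> Re (trace (mabs H))"
proof -
  obtain B l where B: "onb B" and He: "H = spec (\<lambda>b. complex_of_real (l b)) B"
    using herm_decomp[OF h] by blast
  have "trace (C ** H) = (\<Sum>b\<in>B. ip b ((C ** H) *v b))" by (rule trace_onb[OF B])
  also have "\<dots> = (\<Sum>b\<in>B. complex_of_real (l b) * ip b (C *v b))"
    unfolding He matrix_vector_mul_assoc[symmetric]
    using spec_apply_basis[OF B] by (intro sum.cong) (auto simp: mv_scale ip_scale_right)
  finally have tr: "trace (C ** H) = (\<Sum>b\<in>B. complex_of_real (l b) * ip b (C *v b))" .
  have "cmod (trace (C ** H)) \<le> (\<Sum>b\<in>B. cmod (complex_of_real (l b) * ip b (C *v b)))"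
    unfolding tr by (rule norm_sum)
  also have "\<dots> \<le> (\<Sum>b\<in>B. \<bar>l b\<bar>)"
  proof (rule sum_mono)
    fix b assume b: "b \<in> B"
    have "cmod (ip b (C *v b)) \<le> 1" using C onb_norm1[OF B b] unfolding contr_def by (metis power_one)
    then show "cmod (complex_of_real (l b) * ip b (C *v b)) \<le> \<bar>l b\<bar>"
      by (simp add: norm_mult mult_left_le)
  qed
  also have "\<dots> = Re (trace (mabs H))"
    unfolding He mabs_spec[OF B] trace_spec[OF B] by (simp add: Re_sum)
  finally show ?thesis .
qed

lemma tn_sign:
  fixes H :: "complex^'n^'n"
  assumes h: "cadj H = H"
  shows "\<exists>S. contr S \<and> trace (S ** H) = trace (mabs H)"
proof -
  obtain B l where B: "onb B" and He: "H = spec (\<lambda>b. complex_of_real (l b)) B"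
    using herm_decomp[OF h] by blast
  define S where "S = spec (\<lambda>b. complex_of_real (sgn (l b))) B"
  have sg: "\<And>x::real. sgn x * x = \<bar>x\<bar>" by (simp add: sgn_real_def)
  have "S ** H = mabs H"
    unfolding S_def He mabs_spec[OF B] spec_mult[OF B]
    by (simp add: sg flip: of_real_mult)
  moreover have "contr S" unfolding contr_def
  proof
    fix v
    have "ip v (S *v v) = complex_of_real (\<Sum>b\<in>B. sgn (l b) * (cmod (ip b v))^2)"
      unfolding S_def spec_quad[OF B] by (simp add: of_real_sum)
    then have "cmod (ip v (S *v v)) = \<bar>\<Sum>b\<in>B. sgn (l b) * (cmod (ip b v))^2\<bar>" by (metis norm_of_real)
    also have "\<dots> \<le> (\<Sum>b\<in>B. \<bar>sgn (l b) * (cmod (ip b v))^2\<bar>)" by (rule sum_abs)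
    also have "\<dots> \<le> (\<Sum>b\<in>B. (cmod (ip b v))^2)"
      by (intro sum_mono) (simp add: abs_mult abs_sgn_eq)
    also have "\<dots> = (norm v)^2" using onb_parseval[OF B] by simp
    finally show "cmod (ip v (S *v v)) \<le> (norm v)^2" .
  qed
  ultimately show ?thesis by auto
qed

lemma psd_bound:
  assumes M: "psd M" and C: "contr C"
  shows "cmod (trace (C ** M)) \<le> Re (trace M)"
proof -
  have h: "cadj M = M" using M by (simp add: psd_iff)
  have "mabs M = M" by (rule mabs_eq[OF M]) (simp add: h)
  then show ?thesis using tn_bound[OF h C] by simp
qed

lemma contr_id: "contr (mat 1)"
  by (simp add: contr_def ip_self norm_power)

lemma psd_sandwich: assumes "psd M" "cadj Q = Q" shows "psd (Q ** M ** Q)"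
proof -
  have "cadj (Q ** M ** Q) = Q ** M ** Q"
    using assms by (simp add: cadj_mult psd_iff matrix_mul_assoc)
  moreover have "ip v ((Q ** M ** Q) *v v) = ip (Q *v v) (M *v (Q *v v))" for v
    by (metis assms(2) ip_herm matrix_vector_mul_assoc)
  ultimately show ?thesis using assms(1) by (simp add: psd_iff)
qed

lemma mult_diff_left: "(S :: complex^'n^'n) ** (A - B) = S ** A - S ** B"
  by (simp add: matrix_matrix_mult_def vec_eq_iff sum_subtractf right_diff_distrib)
lemma mult_diff_right: "((A - B) :: complex^'n^'n) ** S = A ** S - B ** S"
  by (simp add: matrix_matrix_mult_def vec_eq_iff sum_subtractf left_diff_distrib)
lemma mult_scaleR_right: "(S :: complex^'n^'n) ** (c *\<^sub>R A) = c *\<^sub>R (S ** A)"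
  by (simp add: matrix_matrix_mult_def vec_eq_iff scaleR_sum_right)
lemma trace_scaleR: "trace (c *\<^sub>R (A :: complex^'n^'n)) = c *\<^sub>R trace A"
  by (simp add: trace_def scaleR_sum_right)

lemma main_gen:
  fixes R Rs Q :: "complex^'m^'m" and eps p ps :: real
  assumes hR: "cadj R = R" and pRs: "psd Rs" and hQ: "cadj Q = Q" and QQ: "Q ** Q = Q"
    and cQ: "\<And>C. contr C \<Longrightarrow> contr (Q ** C ** Q)"
    and p: "p = Re (trace (Q ** R ** Q))" and ps: "ps = Re (trace (Q ** Rs ** Q))"
    and pp: "p > 0" and psp: "ps > 0"
    and D: "tdist R Rs \<le> p * eps^2 / 4"
  shows "\<bar>p - ps\<bar> \<le> p * eps^2 / 2 \<and>
     tdist ((1 / p) *\<^sub>R (Q ** R ** Q)) ((1 / ps) *\<^sub>R (Q ** Rs ** Q)) \<le> eps^2 / 2"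
proof -
  have hRs: "cadj Rs = Rs" using pRs by (simp add: psd_iff)
  define Dl where "Dl = R - Rs"
  have hD: "cadj Dl = Dl" by (simp add: Dl_def cadj_diff hR hRs)
  have tD: "Re (trace (mabs Dl)) \<le> p * eps^2 / 2"
    using D unfolding tdist_def Dl_def by simp
  have cyc: "trace (Q ** M ** Q) = trace (Q ** M)" for M
    by (metis QQ matrix_mul_assoc trace_mul_sym)
  have cQ1: "contr Q" using cQ[OF contr_id] QQ by simp
  have "p - ps = Re (trace (Q ** Dl))"
    unfolding p ps cyc Dl_def by (simp add: mult_diff_left trace_sub)
  also have "\<dots> \<le> cmod (trace (Q ** Dl))" by (rule complex_Re_le_cmod)
  also have "\<dots> \<le> Re (trace (mabs Dl))" by (rule tn_bound[OF hD cQ1])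
  finally have d1: "p - ps \<le> p * eps^2 / 2" using tD by linarith
  have "ps - p = Re (- trace (Q ** Dl))"
    unfolding p ps cyc Dl_def by (simp add: mult_diff_left trace_sub)
  also have "\<dots> \<le> cmod (- trace (Q ** Dl))" by (rule complex_Re_le_cmod)
  also have "\<dots> \<le> Re (trace (mabs Dl))" using tn_bound[OF hD cQ1] by simp
  finally have d2: "ps - p \<le> p * eps^2 / 2" using tD by linarith
  have part1: "\<bar>p - ps\<bar> \<le> p * eps^2 / 2" using d1 d2 by linarith
  define X where "X = (1 / p) *\<^sub>R (Q ** R ** Q) - (1 / ps) *\<^sub>R (Q ** Rs ** Q)"
  have hX: "cadj X = X"
    by (simp add: X_def cadj_diff cadj_scaleR cadj_mult hQ hR hRs matrix_mul_assoc)
  obtain S where cS: "contr S" and tS: "trace (S ** X) = trace (mabs X)"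
    using tn_sign[OF hX] by blast
  define t1 where "t1 = trace (S ** (Q ** R ** Q))"
  define t2 where "t2 = trace (S ** (Q ** Rs ** Q))"
  define a where "a = t1 - t2"
  have tSX: "trace (S ** X) = (1 / p) *\<^sub>R t1 - (1 / ps) *\<^sub>R t2"
    unfolding X_def t1_def t2_def by (simp add: mult_diff_left mult_scaleR_right trace_sub trace_scaleR)
  have "a = trace (S ** (Q ** Dl ** Q))"
    unfolding a_def t1_def t2_def Dl_def by (simp add: mult_diff_left mult_diff_right trace_sub)
  also have "\<dots> = trace ((Q ** S ** Q) ** Dl)"
    by (metis matrix_mul_assoc trace_mul_sym)
  finally have aeq: "a = trace ((Q ** S ** Q) ** Dl)" .
  have ca: "cmod a \<le> p * eps^2 / 2"
    using tn_bound[OF hD cQ[OF cS]] aeq tD by simp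
  have psdQ: "psd (Q ** Rs ** Q)" by (rule psd_sandwich[OF pRs hQ])
  have ct2: "cmod t2 \<le> ps" using psd_bound[OF psdQ cS] unfolding t2_def ps by simp
  have "Re (trace (mabs X)) = Re ((1 / p) *\<^sub>R (a + t2) - (1 / ps) *\<^sub>R t2)"
    using tS tSX a_def by simp
  also have "\<dots> = Re a / p + Re t2 * (1 / p - 1 / ps)" by (simp add: algebra_simps)
  also have "\<dots> \<le> eps^2 / 2 + eps^2 / 2"
  proof (rule add_mono)
    have "Re a \<le> p * eps^2 / 2" using ca complex_Re_le_cmod[of a] by linarith
    then show "Re a / p \<le> eps^2 / 2" using pp by (simp add: divide_simps mult.commute)
    have e1: "1 / p - 1 / ps = (ps - p) / (p * ps)" using pp psp by (simp add: field_simps)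
    have r2: "\<bar>Re t2\<bar> \<le> ps" using ct2 abs_Re_le_cmod[of t2] by linarith
    have h2: "\<bar>ps - p\<bar> \<le> p * eps^2 / 2" using part1 by (simp add: abs_minus_commute)
    have "\<bar>Re t2\<bar> * \<bar>ps - p\<bar> \<le> ps * (p * eps^2 / 2)"
      using r2 h2 psp by (intro mult_mono) auto
    then have "\<bar>Re t2 * (ps - p)\<bar> \<le> ps * (p * eps^2 / 2)" by (simp add: abs_mult)
    then have "\<bar>Re t2 * (ps - p)\<bar> / (p * ps) \<le> ps * (p * eps^2 / 2) / (p * ps)"
      by (rule divide_right_mono) (use pp psp in simp)
    also have "\<dots> = eps^2 / 2" using pp psp by simp
    finally have "\<bar>Re t2 * (ps - p) / (p * ps)\<bar> \<le> eps^2 / 2" using pp psp by simp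
    then have "Re t2 * (ps - p) / (p * ps) \<le> eps^2 / 2"
      using abs_ge_self[of "Re t2 * (ps - p) / (p * ps)"] by linarith
    then show "Re t2 * (1 / p - 1 / ps) \<le> eps^2 / 2" unfolding e1 by simp
  qed
  finally have "Re (trace (mabs X)) \<le> eps^2" by simp
  then have "tdist ((1 / p) *\<^sub>R (Q ** R ** Q)) ((1 / ps) *\<^sub>R (Q ** Rs ** Q)) \<le> eps^2 / 2"
    unfolding tdist_def X_def by simp
  then show ?thesis using part1 by blast
qed

lemma sum_pair: "(\<Sum>j\<in>(UNIV::('a::finite \<times> 'b::finite) set). f j) = (\<Sum>a\<in>UNIV. \<Sum>b\<in>UNIV. f (a,b))"
  by (simp add: sum.cartesian_product)

definition sl :: "complex^('x::finite \<times> 'e::finite) \<Rightarrow> 'x \<Rightarrow> complex^'e" where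
  "sl v x = (\<chi> e. v $ (x,e))"

lemma cq_herm:
  assumes "\<And>x. cadj (\<omega> x) = \<omega> x"
  shows "cadj (cq_state P \<omega>) = cq_state P \<omega>"
proof -
  have e: "cnj (\<omega> x $ a $ b) = \<omega> x $ b $ a" for x a b
  proof -
    have "cadj (\<omega> x) $ b $ a = \<omega> x $ b $ a" using assms[of x] by simp
    then show ?thesis by (simp add: cadj_def)
  qed
  show ?thesis by (auto simp: cadj_def cq_state_def vec_eq_iff e)
qed

lemma cq_apply: "(cq_state P \<omega> *v v) $ (x,e) = complex_of_real (P x) * (\<omega> x *v sl v x) $ e"
proof -
  have "(cq_state P \<omega> *v v) $ (x,e) =
      (\<Sum>a\<in>UNIV. \<Sum>b\<in>UNIV. (if x = a then complex_of_real (P x) * \<omega> x $ e $ b else 0) * v $ (a,b))"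
    unfolding matrix_vector_mult_def cq_state_def vec_lambda_beta sum_pair by (intro sum.cong refl) auto
  also have "\<dots> = (\<Sum>a\<in>UNIV. if x = a then (\<Sum>b\<in>UNIV. complex_of_real (P x) * \<omega> x $ e $ b * v $ (x,b)) else 0)"
    by (intro sum.cong) auto
  also have "\<dots> = complex_of_real (P x) * (\<omega> x *v sl v x) $ e"
    by (simp add: matrix_vector_mult_def sl_def sum_distrib_left mult_ac)
  finally show ?thesis .
qed

lemma cq_quad: "ip v (cq_state P \<omega> *v v) = (\<Sum>x\<in>UNIV. complex_of_real (P x) * ip (sl v x) (\<omega> x *v sl v x))"
  unfolding ip_def sum_pair cq_apply by (simp add: sl_def sum_distrib_left mult_ac)

lemma cq_psd:
  assumes "\<And>x. P x \<ge> 0" "\<And>x. psd (\<omega> x)"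
  shows "psd (cq_state P \<omega>)"
proof -
  have h: "cadj (cq_state P \<omega>) = cq_state P \<omega>" using assms(2) by (intro cq_herm) (simp add: psd_iff)
  have "Im (ip v (cq_state P \<omega> *v v)) = 0 \<and> Re (ip v (cq_state P \<omega> *v v)) \<ge> 0" for v
  proof -
    have i: "Im (ip (sl v x) (\<omega> x *v sl v x)) = 0" and r: "Re (ip (sl v x) (\<omega> x *v sl v x)) \<ge> 0" for x
      using assms(2)[of x] by (auto simp: psd_iff)
    show ?thesis unfolding cq_quad using i r assms(1) by (simp add: Re_sum Im_sum sum_nonneg)
  qed
  then show ?thesis using h by (simp add: psd_iff)
qed

lemma proj_apply: "proj_cl S *v v = (\<chi> i. if fst i \<in> S then v $ i else 0)"
proof -
  have "(proj_cl S *v v) $ i = (if fst i \<in> S then v $ i else 0)" for i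
  proof -
    have "(proj_cl S *v v) $ i = (\<Sum>j\<in>UNIV. if j = i then (if fst i \<in> S then v $ i else 0) else 0)"
      unfolding matrix_vector_mult_def proj_cl_def vec_lambda_beta by (intro sum.cong) auto
    then show ?thesis by simp
  qed
  then show ?thesis by (simp add: vec_eq_iff)
qed

lemma proj_herm: "cadj (proj_cl S) = proj_cl S"
  by (auto simp: cadj_def proj_cl_def vec_eq_iff)

lemma proj_idem: "proj_cl S ** proj_cl S = proj_cl S"
  by (subst matrix_eq) (simp add: matrix_vector_mul_assoc[symmetric] proj_apply vec_eq_iff)

lemma proj_norm: "norm (proj_cl S *v v) \<le> norm v"
proof -
  have "(norm (proj_cl S *v v))^2 \<le> (norm v)^2"
    unfolding norm_sq_vec proj_apply by (intro sum_mono) auto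
  then show ?thesis by (rule power2_le_imp_le) simp
qed

lemma proj_contr: assumes "contr C" shows "contr (proj_cl S ** C ** proj_cl S)"
  unfolding contr_def
proof
  fix v
  let ?Q = "proj_cl S"
  have "ip v ((?Q ** C ** ?Q) *v v) = ip (?Q *v v) (C *v (?Q *v v))"
    by (metis proj_herm ip_herm matrix_vector_mul_assoc)
  then have "cmod (ip v ((?Q ** C ** ?Q) *v v)) \<le> (norm (?Q *v v))^2"
    using assms unfolding contr_def by simp
  also have "\<dots> \<le> (norm v)^2" using proj_norm by (simp add: power_mono)
  finally show "cmod (ip v ((?Q ** C ** ?Q) *v v)) \<le> (norm v)^2" .
qed

theorem lemma3:
  fixes P Ps :: "'x::finite \<Rightarrow> real"
    and \<omega> \<omega>s :: "'x \<Rightarrow> complex^'e::finite^'e"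
    and S :: "'x set" and \<epsilon> :: real
  assumes "\<forall>x. P x \<ge> 0" and "(\<Sum>x\<in>UNIV. P x) = 1"
    and "\<forall>x. Ps x \<ge> 0" and "(\<Sum>x\<in>UNIV. Ps x) = 1"
    and "\<forall>x. density (\<omega> x)" and "\<forall>x. density (\<omega>s x)"
    and "\<epsilon> > 0"
  defines "\<rho> \<equiv> cq_state P \<omega>" and "\<rho>s \<equiv> cq_state Ps \<omega>s"
    and "Proj \<equiv> (proj_cl S :: complex^('x \<times> 'e)^('x \<times> 'e))"
  defines "p \<equiv> Re (trace (Proj ** \<rho> ** Proj))" and "ps \<equiv> Re (trace (Proj ** \<rho>s ** Proj))"
  defines "\<tau> \<equiv> (1 / p) *\<^sub>R (Proj ** \<rho> ** Proj)" and "\<tau>s \<equiv> (1 / ps) *\<^sub>R (Proj ** \<rho>s ** Proj)"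
  assumes "p > 0" and "ps > 0"
    and "tdist \<rho> \<rho>s \<le> p * \<epsilon>^2 / 4"
  shows "\<bar>p - ps\<bar> \<le> p * \<epsilon>^2 / 2 \<and> tdist \<tau> \<tau>s \<le> \<epsilon>^2 / 2"
proof -
  have pw: "psd (\<omega> x)" "psd (\<omega>s x)" for x using assms(5,6) by (auto simp: density_def)
  have hR: "cadj \<rho> = \<rho>" unfolding \<open>\<rho> \<equiv> cq_state P \<omega>\<close> using pw
    by (intro cq_herm) (simp add: psd_iff)
  have pRs: "psd \<rho>s" unfolding \<open>\<rho>s \<equiv> cq_state Ps \<omega>s\<close> using pw assms(3) by (intro cq_psd) auto
  have hQ: "cadj Proj = Proj" unfolding \<open>Proj \<equiv> proj_cl S\<close> by (rule proj_herm)
  have QQ: "Proj ** Proj = Proj" unfolding \<open>Proj \<equiv> proj_cl S\<close> by (rule proj_idem)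
  have cQ: "\<And>C. contr C \<Longrightarrow> contr (Proj ** C ** Proj)" unfolding \<open>Proj \<equiv> proj_cl S\<close> by (rule proj_contr)
  have pe: "p = Re (trace (Proj ** \<rho> ** Proj))" unfolding \<open>p \<equiv> Re (trace (Proj ** \<rho> ** Proj))\<close> ..
  have pse: "ps = Re (trace (Proj ** \<rho>s ** Proj))" unfolding \<open>ps \<equiv> Re (trace (Proj ** \<rho>s ** Proj))\<close> ..
  have "\<bar>p - ps\<bar> \<le> p * \<epsilon>^2 / 2 \<and>
     tdist ((1 / p) *\<^sub>R (Proj ** \<rho> ** Proj)) ((1 / ps) *\<^sub>R (Proj ** \<rho>s ** Proj)) \<le> \<epsilon>^2 / 2"
    by (rule main_gen[OF hR pRs hQ QQ cQ pe pse \<open>p > 0\<close> \<open>ps > 0\<close> \<open>tdist \<rho> \<rho>s \<le> p * \<epsilon>^2 / 4\<close>])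
  then show ?thesis unfolding \<open>\<tau> \<equiv> (1 / p) *\<^sub>R (Proj ** \<rho> ** Proj)\<close>
      \<open>\<tau>s \<equiv> (1 / ps) *\<^sub>R (Proj ** \<rho>s ** Proj)\<close> .
qed

end
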